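(* Let $\mathcal{A}$ be a $C^*$-algebra and $V\subseteq\mathcal{A}$ a $\sigma$-subspace such that $a^2\in V$ for every self-adjoint $a\in V$. Then $V$ is norm-closed.
   Context: All $C^*$-algebras are unital. For a bounded increasing sequence $(a_n)$ of self-adjoint elements, $\sup_n a_n$ denotes its supremum in the poset of self-adjoint elements of $\mathcal{A}$, if it exists. A $\sigma$-subspace $V\subseteq\mathcal{A}$ is a linear subspace closed under the involution such that whenever $(a_n)\subseteq V$ is a norm-bounded increasing sequence of self-adjoint elements with supremum $a$ in $\mathcal{A}$, then $a\in V$. *)

theory Defs
  imports "HOL-Analysis.Analysis"
begin

text \<open>A unital C*-algebra: a real Banach algebra with unit (norm 1 = 1) carrying a
complex scalar multiplication sc (compatible with the real one) and an involution st
satisfying the C*-identity.\<close>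

definition cstar_algebra ::
  "(complex \<Rightarrow> 'a::{real_normed_algebra_1,banach} \<Rightarrow> 'a) \<Rightarrow> ('a \<Rightarrow> 'a) \<Rightarrow> bool" where
  "cstar_algebra sc st \<longleftrightarrow>
     (\<forall>a b x. sc (a + b) x = sc a x + sc b x) \<and>
     (\<forall>a x y. sc a (x + y) = sc a x + sc a y) \<and>
     (\<forall>a b x. sc a (sc b x) = sc (a * b) x) \<and>
     (\<forall>r x. sc (complex_of_real r) x = scaleR r x) \<and>
     (\<forall>a x. norm (sc a x) = cmod a * norm x) \<and>
     (\<forall>a x y. sc a x * y = sc a (x * y)) \<and>
     (\<forall>a x y. x * sc a y = sc a (x * y)) \<and>
     (\<forall>x. st (st x) = x) \<and>
     (\<forall>x y. st (x + y) = st x + st y) \<and>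
     (\<forall>a x. st (sc a x) = sc (cnj a) (st x)) \<and>
     (\<forall>x y. st (x * y) = st y * st x) \<and>
     (\<forall>x. norm (st x * x) = (norm x)\<^sup>2)"

definition self_adjoint :: "('a \<Rightarrow> 'a) \<Rightarrow> 'a \<Rightarrow> bool" where
  "self_adjoint st a \<longleftrightarrow> st a = a"

definition cspectrum ::
  "(complex \<Rightarrow> 'a::ring_1 \<Rightarrow> 'a) \<Rightarrow> 'a \<Rightarrow> complex set" where
  "cspectrum sc a = {l. \<not> (\<exists>b. b * (a - sc l 1) = 1 \<and> (a - sc l 1) * b = 1)}"

definition positive_el ::
  "(complex \<Rightarrow> 'a::ring_1 \<Rightarrow> 'a) \<Rightarrow> ('a \<Rightarrow> 'a) \<Rightarrow> 'a \<Rightarrow> bool" where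
  "positive_el sc st a \<longleftrightarrow> self_adjoint st a \<and>
     (\<forall>l\<in>cspectrum sc a. Im l = 0 \<and> Re l \<ge> 0)"

definition sa_le ::
  "(complex \<Rightarrow> 'a::ring_1 \<Rightarrow> 'a) \<Rightarrow> ('a \<Rightarrow> 'a) \<Rightarrow> 'a \<Rightarrow> 'a \<Rightarrow> bool" where
  "sa_le sc st a b \<longleftrightarrow> self_adjoint st a \<and> self_adjoint st b \<and> positive_el sc st (b - a)"

definition is_sa_sup ::
  "(complex \<Rightarrow> 'a::ring_1 \<Rightarrow> 'a) \<Rightarrow> ('a \<Rightarrow> 'a) \<Rightarrow> (nat \<Rightarrow> 'a) \<Rightarrow> 'a \<Rightarrow> bool" where
  "is_sa_sup sc st x s \<longleftrightarrow> self_adjoint st s \<and> (\<forall>n. sa_le sc st (x n) s) \<and>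
     (\<forall>u. self_adjoint st u \<and> (\<forall>n. sa_le sc st (x n) u) \<longrightarrow> sa_le sc st s u)"

definition sigma_subspace ::
  "(complex \<Rightarrow> 'a::{real_normed_algebra_1} \<Rightarrow> 'a) \<Rightarrow> ('a \<Rightarrow> 'a) \<Rightarrow> 'a set \<Rightarrow> bool" where
  "sigma_subspace sc st V \<longleftrightarrow>
     0 \<in> V \<and> (\<forall>x\<in>V. \<forall>y\<in>V. x + y \<in> V) \<and> (\<forall>c. \<forall>x\<in>V. sc c x \<in> V) \<and>
     (\<forall>x\<in>V. st x \<in> V) \<and>
     (\<forall>x s. (\<forall>n. x n \<in> V \<and> self_adjoint st (x n)) \<and>
            (\<forall>n. sa_le sc st (x n) (x (Suc n))) \<and> bounded (range x) \<and>
            is_sa_sup sc st x s \<longrightarrow> s \<in> V)"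

end

theory Submission
  imports Defs
begin

definition isinv :: "'a::ring_1 \<Rightarrow> bool" where
  "isinv x \<longleftrightarrow> (\<exists>z. z * x = 1 \<and> x * z = 1)"

definition ainv :: "'a::ring_1 \<Rightarrow> 'a" where
  "ainv x = (SOME z. z * x = 1 \<and> x * z = 1)"

lemma inv_unique:
  fixes x :: "'a::ring_1"
  assumes "z * x = 1" "x * w = 1" shows "z = w"
proof -
  have "z = z * (x * w)" using assms by simp
  also have "\<dots> = (z * x) * w" by (simp add: mult.assoc)
  finally show ?thesis using assms by simp
qed

lemma ainv_props:
  assumes "isinv x" shows "ainv x * x = 1" "x * ainv x = 1"
  using someI_ex[OF assms[unfolded isinv_def]] unfolding ainv_def by auto

lemma ainv_eq:
  fixes x :: "'a::ring_1"
  assumes "z * x = 1" "x * z = 1" shows "isinv x" "ainv x = z"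
proof -
  show i: "isinv x" using assms unfolding isinv_def by blast
  show "ainv x = z" using inv_unique[OF ainv_props(1)[OF i] assms(2)] .
qed

lemma isinv_one[simp]: "isinv (1::'a::ring_1)" and ainv_one[simp]: "ainv (1::'a::ring_1) = 1"
  using ainv_eq[of 1 1] by auto

lemma isinv_mult:
  fixes x y :: "'a::ring_1"
  assumes "isinv x" "isinv y"
  shows "isinv (x * y)" "ainv (x * y) = ainv y * ainv x"
proof -
  have "(ainv y * ainv x) * (x * y) = 1"
    by (metis ainv_props assms mult.assoc mult_1_left)
  moreover have "(x * y) * (ainv y * ainv x) = 1"
    by (metis ainv_props assms mult.assoc mult_1_left)
  ultimately show "isinv (x * y)" "ainv (x * y) = ainv y * ainv x"
    using ainv_eq by blast+
qed

lemma isinv_commute_factor: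
  fixes x y :: "'a::ring_1"
  assumes "isinv (x * y)" "x * y = y * x"
  shows "isinv x"
proof -
  let ?w = "ainv (x * y)"
  have "(?w * y) * x = 1" using ainv_props(1)[OF assms(1)] assms(2) by (simp add: mult.assoc)
  moreover have "x * (y * ?w) = 1" using ainv_props(2)[OF assms(1)] by (simp add: mult.assoc)
  ultimately show ?thesis unfolding isinv_def
    by (metis inv_unique)
qed

lemma commute_ainv:
  fixes x y :: "'a::ring_1"
  assumes "isinv y" "x * y = y * x"
  shows "x * ainv y = ainv y * x"
proof -
  have "x * ainv y = ainv y * y * x * ainv y" using ainv_props[OF assms(1)] by simp
  also have "\<dots> = ainv y * x * y * ainv y" using assms(2) by (simp add: mult.assoc)
  also have "\<dots> = ainv y * x" using ainv_props[OF assms(1)] by (simp add: mult.assoc)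
  finally show ?thesis .
qed

lemma isinv_ainv: "isinv x \<Longrightarrow> isinv (ainv x) \<and> ainv (ainv x) = x"
  using ainv_eq[of x "ainv x"] ainv_props by blast

lemma neumann:
  fixes e :: "'a::{real_normed_algebra_1,banach}"
  assumes "norm e < 1"
  shows "isinv (1 - e)" "norm (ainv (1 - e)) \<le> 1 / (1 - norm e)"
proof -
  have sn: "summable (\<lambda>n. norm e ^ n)" using assms by simp
  have sn2: "summable (\<lambda>n. norm (e ^ n))"
    by (rule summable_comparison_test[OF _ sn]) (auto simp: norm_power_ineq)
  have s: "summable (\<lambda>n. e ^ n)" using summable_norm_cancel[OF sn2] .
  define S where "S = (\<Sum>n. e ^ n)"
  have split: "S = (\<Sum>n. e ^ (n + 1)) + 1"
    using suminf_split_initial_segment[OF s, of 1] unfolding S_def by simp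
  have a: "(\<Sum>n. e ^ (n + 1)) = e * S"
    unfolding S_def using suminf_mult[OF s, of e] by (simp add: power_Suc)
  have ee: "(\<lambda>n. e ^ (n+1)) = (\<lambda>n. e^n * e)" by (simp add: power_commutes)
  have b: "(\<Sum>n. e ^ (n + 1)) = S * e"
    unfolding S_def using suminf_mult2[OF s, of e] ee by simp
  have "(1 - e) * S = 1" using split a by (simp add: algebra_simps)
  moreover have "S * (1 - e) = 1" using split b by (simp add: algebra_simps)
  ultimately have i: "isinv (1 - e)" "ainv (1 - e) = S" using ainv_eq by blast+
  show "isinv (1 - e)" by (fact i)
  have "norm S \<le> (\<Sum>n. norm (e ^ n))" unfolding S_def using summable_norm[OF sn2] .
  also have "\<dots> \<le> (\<Sum>n. norm e ^ n)"
    using suminf_le[OF _ sn2 sn] by (simp add: norm_power_ineq)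
  also have "\<dots> = 1 / (1 - norm e)" using suminf_geometric[of "norm e"] assms by simp
  finally show "norm (ainv (1 - e)) \<le> 1 / (1 - norm e)" using i by simp
qed

lemma perturb:
  fixes x h :: "'a::{real_normed_algebra_1,banach}"
  assumes "isinv x" "norm h * norm (ainv x) \<le> 1/2"
  shows "isinv (x + h)" "norm (ainv (x + h)) \<le> 2 * norm (ainv x)"
    "norm (ainv (x + h) - ainv x) \<le> 2 * norm (ainv x) ^ 2 * norm h"
proof -
  define e where "e = - (ainv x * h)"
  have ne: "norm e \<le> 1/2" unfolding e_def using norm_mult_ineq[of "ainv x" h] assms(2)
    by (simp add: mult.commute)
  then have ne1: "norm e < 1" by simp
  have xh: "x + h = x * (1 - e)" unfolding e_def
    using ainv_props[OF assms(1)] by (simp add: algebra_simps mult.assoc[symmetric])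
  note N = neumann[OF ne1]
  have "1 / (1 - norm e) \<le> 2" using ne by (simp add: field_simps)
  with N(2) have n2: "norm (ainv (1 - e)) \<le> 2" by linarith
  have I: "isinv (x + h)" "ainv (x + h) = ainv (1 - e) * ainv x"
    using isinv_mult[OF assms(1) N(1)] xh by auto
  show "isinv (x + h)" by (fact I)
  have "norm (ainv (x + h)) \<le> norm (ainv (1 - e)) * norm (ainv x)"
    using I(2) norm_mult_ineq by metis
  also have "\<dots> \<le> 2 * norm (ainv x)" using n2 by (simp add: mult_right_mono)
  finally show n3: "norm (ainv (x + h)) \<le> 2 * norm (ainv x)" .
  have "ainv (x + h) * (x - (x + h)) * ainv x
      = ainv (x + h) * (x * ainv x) - (ainv (x + h) * (x + h)) * ainv x"
    by (simp add: right_diff_distrib left_diff_distrib distrib_left distrib_right mult.assoc)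
  also have "\<dots> = ainv (x + h) - ainv x"
    using ainv_props[OF assms(1)] ainv_props[OF I(1)] by simp
  finally have "ainv (x + h) - ainv x = ainv (x + h) * (x - (x + h)) * ainv x" by simp
  also have "\<dots> = - (ainv (x + h) * h * ainv x)" by (simp add: algebra_simps)
  finally have "norm (ainv (x + h) - ainv x) = norm (ainv (x + h) * h * ainv x)" by simp
  also have "\<dots> \<le> norm (ainv (x + h)) * norm h * norm (ainv x)"
    using order_trans[OF norm_mult_ineq[of "ainv (x + h) * h" "ainv x"]
        mult_right_mono[OF norm_mult_ineq[of "ainv (x + h)" h] norm_ge_zero]] .
  also have "\<dots> \<le> (2 * norm (ainv x)) * norm h * norm (ainv x)"
    using n3 by (intro mult_right_mono) auto
  finally show "norm (ainv (x + h) - ainv x) \<le> 2 * norm (ainv x) ^ 2 * norm h"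
    by (simp add: power2_eq_square mult_ac)
qed

locale cstar =
  fixes sc :: "complex \<Rightarrow> 'a::{real_normed_algebra_1,banach} \<Rightarrow> 'a" and st :: "'a \<Rightarrow> 'a"
  assumes cs: "cstar_algebra sc st"
begin

lemma sc_addl: "sc (a + b) x = sc a x + sc b x" and sc_addr: "sc a (x + y) = sc a x + sc a y"
  and sc_sc: "sc a (sc b x) = sc (a * b) x" and sc_real: "sc (complex_of_real r) x = scaleR r x"
  and sc_norm: "norm (sc a x) = cmod a * norm x" and sc_multl: "sc a x * y = sc a (x * y)"
  and sc_multr: "x * sc a y = sc a (x * y)" and st_st[simp]: "st (st x) = x"
  and st_add: "st (x + y) = st x + st y" and st_sc: "st (sc a x) = sc (cnj a) (st x)"
  and st_mult: "st (x * y) = st y * st x" and cstar_id: "norm (st x * x) = (norm x)\<^sup>2"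
  using cs unfolding cstar_algebra_def by auto

definition emb :: "complex \<Rightarrow> 'a" where "emb c = sc c 1"

lemma sc_emb: "sc c x = emb c * x"
  unfolding emb_def using sc_multl[of c 1 x] by simp

lemma emb_central: "emb c * x = x * emb c"
  unfolding emb_def using sc_multr[of x c 1] sc_multl[of c 1 x] by simp

lemma emb_mult: "emb (a * b) = emb a * emb b"
  unfolding emb_def using sc_sc[of a b 1] sc_multl[of a 1 "sc b 1"] by simp

lemma emb_add: "emb (a + b) = emb a + emb b"
  unfolding emb_def by (rule sc_addl)

lemma emb_of_real: "emb (complex_of_real r) = of_real r"
  unfolding emb_def using sc_real[of r 1] by (simp add: of_real_def)

lemma emb_0[simp]: "emb 0 = 0" using emb_of_real[of 0] by simp
lemma emb_1[simp]: "emb 1 = 1" using emb_of_real[of 1] by simp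

lemma emb_minus: "emb (- a) = - emb a"
  using add.inverse_unique[of "emb a" "emb (-a)"] emb_add[of a "-a"] by simp

lemma emb_diff: "emb (a - b) = emb a - emb b"
  using emb_add[of a "-b"] emb_minus[of b] by simp

lemma norm_emb_mult: "norm (emb c * x) = cmod c * norm x"
  using sc_norm sc_emb by metis

lemma norm_emb: "norm (emb c) = cmod c"
  using norm_emb_mult[of c 1] by simp

lemma emb_real_mult: "emb (complex_of_real r) * x = r *\<^sub>R x"
  using sc_real sc_emb by metis

lemma emb_isinv: assumes "c \<noteq> 0" shows "isinv (emb c)" "ainv (emb c) = emb (1 / c)"
proof -
  have "emb (1/c) * emb c = 1" "emb c * emb (1/c) = 1"
    using assms emb_mult[of "1/c" c] emb_mult[of c "1/c"] by auto
  then show "isinv (emb c)" "ainv (emb c) = emb (1 / c)" using ainv_eq by blast+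
qed

lemma emb_power: "emb (c ^ n) = emb c ^ n"
  by (induction n) (auto simp: emb_mult)

lemma st_0[simp]: "st 0 = 0" using st_add[of 0 0] by simp

lemma st_minus: "st (- x) = - st x"
  using add.inverse_unique[of "st x" "st (-x)"] st_add[of x "-x"] by simp

lemma st_diff: "st (x - y) = st x - st y"
  using st_add[of x "-y"] st_minus[of y] by simp

lemma st_1[simp]: "st 1 = 1"
proof -
  have "st (st 1) = st (st 1 * 1)" by simp
  also have "\<dots> = st 1 * st (st 1)" by (rule st_mult)
  finally show ?thesis by simp
qed

lemma st_emb: "st (emb c) = emb (cnj c)"
  unfolding emb_def using st_sc[of c 1] by simp

lemma st_emb_mult: "st (emb c * x) = emb (cnj c) * st x"
  using st_mult[of "emb c" x] st_emb emb_central by simp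

lemma st_scaleR: "st (r *\<^sub>R x) = r *\<^sub>R st x"
  using st_emb_mult[of "complex_of_real r" x] emb_real_mult by simp

lemma st_sum: "st (sum f A) = sum (\<lambda>i. st (f i)) A"
  by (induction A rule: infinite_finite_induct) (auto simp: st_add)

lemma st_power: "st (x ^ n) = st x ^ n"
  by (induction n) (auto simp: st_mult power_commutes)

lemma norm_st: "norm (st x) = norm x"
proof -
  have le: "norm y \<le> norm (st y)" for y
  proof (cases "y = 0")
    case False
    have "(norm y)\<^sup>2 \<le> norm (st y) * norm y" using cstar_id[of y] norm_mult_ineq by metis
    then show ?thesis using False by (simp add: power2_eq_square)
  qed simp
  show ?thesis using le[of x] le[of "st x"] by simp
qed

lemma st_continuous: "(\<lambda>n. f n) \<longlonglongrightarrow> l \<Longrightarrow> (\<lambda>n. st (f n)) \<longlonglongrightarrow> st l"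
proof -
  assume a: "f \<longlonglongrightarrow> l"
  have "(\<lambda>n. norm (f n - l)) \<longlonglongrightarrow> 0" using tendsto_norm_zero[OF LIM_zero[OF a]] .
  moreover have "norm (st (f n) - st l) = norm (f n - l)" for n
    using norm_st st_diff by metis
  ultimately have "(\<lambda>n. norm (st (f n) - st l)) \<longlonglongrightarrow> 0" by simp
  then have "(\<lambda>n. st (f n) - st l) \<longlonglongrightarrow> 0" by (rule tendsto_norm_zero_cancel)
  then show ?thesis by (rule LIM_zero_cancel)
qed

abbreviation sa :: "'a \<Rightarrow> bool" where "sa x \<equiv> self_adjoint st x"

lemma sa_norm_sq: "sa x \<Longrightarrow> norm (x * x) = (norm x)\<^sup>2"
  using cstar_id[of x] unfolding self_adjoint_def by simp

lemma sa_power: "sa x \<Longrightarrow> sa (x ^ n)"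
  unfolding self_adjoint_def using st_power by simp

lemma sa_norm_pow2: "sa x \<Longrightarrow> norm (x ^ (2 ^ k)) = norm x ^ (2 ^ k)"
proof (induction k)
  case (Suc k)
  have "x ^ (2 ^ Suc k) = x ^ (2 ^ k) * x ^ (2 ^ k)"
    by (simp add: power_add[symmetric] mult_2)
  then have "norm (x ^ (2 ^ Suc k)) = (norm (x ^ (2 ^ k)))\<^sup>2"
    using sa_norm_sq[OF sa_power[OF Suc.prems]] by simp
  then show ?case using Suc by (simp add: power_mult[symmetric] power_Suc2 mult.commute)
qed simp

lemma mem_spec: "l \<in> cspectrum sc x \<longleftrightarrow> \<not> isinv (x - emb l)"
  unfolding cspectrum_def isinv_def emb_def by auto

lemma spec_bound: assumes "cmod l > norm x" shows "isinv (x - emb l)"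
proof -
  have l0: "l \<noteq> 0" using assms by (metis norm_ge_zero norm_zero not_less)
  define e where "e = emb (1/l) * x"
  have ne: "norm e < 1" unfolding e_def using norm_emb_mult assms l0
    by (simp add: norm_divide divide_less_eq_1 field_simps)
  have "x - emb l = emb (- l) * (1 - e)"
    unfolding e_def using l0
    by (simp add: right_diff_distrib mult.assoc[symmetric] emb_mult[symmetric] emb_minus)
  then show ?thesis using isinv_mult(1)[OF emb_isinv(1) neumann(1)[OF ne]] l0 by simp
qed

lemma spec_le: "l \<in> cspectrum sc x \<Longrightarrow> cmod l \<le> norm x"
  using spec_bound mem_spec by force

lemma spec_shift: "l \<in> cspectrum sc x \<Longrightarrow> l + c \<in> cspectrum sc (x + emb c)"
  unfolding mem_spec by (simp add: emb_add)

lemma sa_spec_real: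
  assumes "sa x" "l \<in> cspectrum sc x" shows "Im l = 0"
proof (rule ccontr)
  assume b: "Im l \<noteq> 0"
  define t where "t = ((norm x)\<^sup>2 + 1) / (2 * Im l)"
  let ?y = "x + emb (\<i> * complex_of_real t)"
  have "cmod (l + \<i> * complex_of_real t) \<le> norm ?y"
    using spec_le[OF spec_shift[OF assms(2)]] .
  then have A: "(cmod (l + \<i> * complex_of_real t))\<^sup>2 \<le> (norm ?y)\<^sup>2"
    by (simp add: power_mono)
  have sty: "st ?y = x - emb (\<i> * complex_of_real t)"
    using assms(1) unfolding self_adjoint_def by (simp add: st_add st_emb emb_minus)
  define e where "e = emb (\<i> * complex_of_real t)"
  have ii: "\<i> * complex_of_real t * (\<i> * complex_of_real t) = - complex_of_real (t\<^sup>2)"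
    by (simp add: power2_eq_square mult.assoc mult.left_commute)
  have ee: "e * e = - emb (complex_of_real (t\<^sup>2))" unfolding e_def
    by (simp only: emb_mult[symmetric] ii emb_minus)
  have "st ?y * ?y = (x - e) * (x + e)" unfolding sty e_def ..
  also have "\<dots> = x * x + (x * e - e * x) - e * e"
    by (simp add: left_diff_distrib right_diff_distrib distrib_left distrib_right)
  also have "\<dots> = x * x + emb (complex_of_real (t\<^sup>2))"
    using emb_central[of _ x] ee unfolding e_def by simp
  finally have "st ?y * ?y = x * x + emb (complex_of_real (t\<^sup>2))" .
  then have "(norm ?y)\<^sup>2 = norm (x * x + emb (complex_of_real (t\<^sup>2)))" using cstar_id by metis
  also have "\<dots> \<le> norm (x * x) + norm (emb (complex_of_real (t\<^sup>2)))" by (rule norm_triangle_ineq)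
  also have "\<dots> \<le> (norm x)\<^sup>2 + t\<^sup>2"
    using norm_mult_ineq[of x x] by (simp add: norm_emb norm_power power2_eq_square[of "norm x"])
  finally have B: "(norm ?y)\<^sup>2 \<le> (norm x)\<^sup>2 + t\<^sup>2" .
  have "(cmod (l + \<i> * complex_of_real t))\<^sup>2 = (Re l)\<^sup>2 + (Im l + t)\<^sup>2"
    by (simp add: cmod_power2)
  moreover have "(Im l + t)\<^sup>2 = (Im l)\<^sup>2 + 2 * Im l * t + t\<^sup>2"
    by (simp add: power2_eq_square algebra_simps)
  ultimately have "(Re l)\<^sup>2 + (Im l)\<^sup>2 + 2 * Im l * t \<le> (norm x)\<^sup>2"
    using A B by linarith
  moreover have "2 * Im l * t = (norm x)\<^sup>2 + 1" unfolding t_def using b by simp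
  ultimately show False using zero_le_power2[of "Re l"] zero_le_power2[of "Im l"] by linarith
qed

lemma sq_positive:
  assumes "sa x" "\<not> (Im l = 0 \<and> Re l \<ge> 0)"
  shows "isinv (x * x - emb l)"
proof -
  define m where "m = csqrt l"
  have mm: "m * m = l" unfolding m_def using power2_csqrt[of l] by (simp add: power2_eq_square)
  have nr: "Im m \<noteq> 0"
  proof
    assume "Im m = 0"
    then have "l = complex_of_real ((Re m)\<^sup>2)" using mm
      by (metis complex_is_Real_iff Reals_mult of_real_Re of_real_mult power2_eq_square)
    then show False using assms(2) by simp
  qed
  have i1: "isinv (x - emb m)" using sa_spec_real[OF assms(1)] nr mem_spec by blast
  have i2: "isinv (x - emb (- m))" using sa_spec_real[OF assms(1), of "-m"] nr mem_spec by force
  have "(x - emb m) * (x - emb (- m)) = (x - emb m) * (x + emb m)"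
    by (simp add: emb_minus)
  also have "\<dots> = x * x + (x * emb m - emb m * x) - emb m * emb m"
    by (simp add: left_diff_distrib right_diff_distrib distrib_left distrib_right)
  also have "\<dots> = x * x - emb l"
    using emb_central[of m x] by (simp add: emb_mult[symmetric] mm)
  finally have "(x - emb m) * (x - emb (- m)) = x * x - emb l" .
  then show ?thesis using isinv_mult(1)[OF i1 i2] by simp
qed

end

lemma rou_sum:
  fixes N k :: nat
  assumes N: "N > 0"
  defines "\<omega> \<equiv> cis (2 * pi / real N)"
  shows "(\<Sum>j<N. (\<omega> ^ k) ^ j) = (if N dvd k then of_nat N else 0)"
proof (cases "N dvd k")
  case True
  then obtain q where k: "k = N * q" by blast
  have w1: "\<omega> ^ N = 1" unfolding \<omega>_def using N by (simp add: Complex.DeMoivre)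
  have "\<omega> ^ k = 1" unfolding k power_mult w1 by simp
  then show ?thesis using True by simp
next
  case False
  have ne: "\<omega> ^ k \<noteq> 1"
  proof
    assume "\<omega> ^ k = 1"
    then have "cis (real k * (2 * pi / real N)) = 1" unfolding \<omega>_def by (simp add: Complex.DeMoivre)
    then have "cos (real k * (2 * pi / real N)) = 1" by (simp add: complex_eq_iff)
    then obtain m :: int where m: "real k * (2 * pi / real N) = real_of_int m * 2 * pi"
      by (subst (asm) cos_one_2pi_int) blast
    then have "real k = real_of_int m * real N" using N by (simp add: field_simps)
    then have "int k = m * int N" by (metis of_int_eq_iff of_int_mult of_int_of_nat_eq)
    then have "int N dvd int k" by simp
    then show False using False by simp
  qed
  have w1: "\<omega> ^ N = 1" unfolding \<omega>_def using N by (simp add: Complex.DeMoivre)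
  have "(\<omega> ^ k) ^ N = 1" unfolding power_mult[symmetric] mult.commute[of k N] power_mult w1 by simp
  then have "(\<Sum>j<N. (\<omega> ^ k) ^ j) = 0"
    using geometric_sum[OF ne, of N] by simp
  then show ?thesis using False by simp
qed

lemma geo_ring:
  fixes x :: "'a::ring_1"
  shows "(1 - x) * (\<Sum>m<n. x ^ m) = 1 - x ^ n"
proof (induction n)
  case (Suc n)
  have "(1 - x) * (\<Sum>m<Suc n. x ^ m) = (1 - x) * (\<Sum>m<n. x ^ m) + (1 - x) * x ^ n"
    by (simp add: distrib_left)
  also have "\<dots> = 1 - x ^ n + (x ^ n - x ^ Suc n)"
    using Suc by (simp add: left_diff_distrib)
  finally show ?case by simp
qed simp

context cstar
begin

lemma emb_sum: "emb (sum f A) = sum (\<lambda>i. emb (f i)) A"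
  by (induction A rule: infinite_finite_induct) (auto simp: emb_add)

lemma emb_of_nat: "emb (of_nat n) = of_nat n"
  using emb_of_real[of "real n"] by simp

lemma emb_comm_left: "x * (emb d * z) = emb d * (x * z)"
  by (simp add: mult.assoc[symmetric] emb_central[of d x])

lemma emb_mult_power: "(emb c * x) ^ n = emb (c ^ n) * x ^ n"
proof (induction n)
  case (Suc n)
  have "(emb c * x) ^ Suc n = (emb c * x) * (emb (c ^ n) * x ^ n)" using Suc by simp
  also have "\<dots> = emb c * emb (c ^ n) * (x * x ^ n)"
    by (simp only: mult.assoc emb_comm_left[of x "c ^ n" "x ^ n"])
  also have "\<dots> = emb (c ^ Suc n) * x ^ Suc n" by (simp add: emb_mult[symmetric])
  finally show ?case .
qed simp

lemma emb_terms_mult: "(emb c * x ^ m) * (emb d * x ^ n) = emb (c * d) * x ^ (m + n)"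
proof -
  have "(emb c * x ^ m) * (emb d * x ^ n) = emb c * (x ^ m * emb d) * x ^ n"
    by (simp add: mult.assoc)
  also have "\<dots> = emb c * emb d * (x ^ m * x ^ n)"
    by (simp only: mult.assoc emb_comm_left[of "x ^ m" d "x ^ n"])
  finally show ?thesis by (simp add: emb_mult power_add)
qed

lemma rou_identity:
  fixes a :: 'a and N :: nat
  assumes N: "N > 0"
  defines "\<omega> \<equiv> cis (2 * pi / real N)"
  assumes inv: "\<And>j. j < N \<Longrightarrow> isinv (1 - emb (\<omega> ^ j) * a)"
  shows "(\<Sum>j<N. emb (\<omega> ^ j) * ainv (1 - emb (\<omega> ^ j) * a) * ainv (1 - emb (\<omega> ^ j) * a))
           * (1 - a ^ N) * (1 - a ^ N) = of_nat (N * N) * a ^ (N - 1)"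
proof -
  have w1: "\<omega> ^ N = 1" unfolding \<omega>_def using N by (simp add: Complex.DeMoivre)
  have wN: "(\<omega> ^ j) ^ N = 1" for j
    unfolding power_mult[symmetric] mult.commute[of j N] power_mult w1 by simp
  define w where "w = 1 - a ^ N"
  define S where "S j = (\<Sum>m<N. emb ((\<omega> ^ j) ^ m) * a ^ m)" for j
  define R where "R j = ainv (1 - emb (\<omega> ^ j) * a)" for j
  have Seq: "S j = (\<Sum>m<N. (emb (\<omega> ^ j) * a) ^ m)" for j
    unfolding S_def by (simp add: emb_mult_power)
  have uS: "(1 - emb (\<omega> ^ j) * a) * S j = w" for j
    unfolding Seq geo_ring w_def emb_mult_power wN by simp
  have comm_w: "S j * w = w * S j" for j
  proof -
    have "a ^ m * a ^ N = a ^ N * a ^ m" for m by (simp add: power_add[symmetric] add.commute)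
    then have "(emb c * a ^ m) * a ^ N = a ^ N * (emb c * a ^ m)" for c m
      by (simp only: mult.assoc emb_comm_left[of "a ^ N" c "a ^ m"])
    then have "S j * a ^ N = a ^ N * S j"
      unfolding S_def by (simp add: sum_distrib_left sum_distrib_right)
    then show ?thesis unfolding w_def by (simp add: left_diff_distrib right_diff_distrib)
  qed
  have RS: "R j * w = S j" if "j < N" for j
  proof -
    have "R j * w = R j * ((1 - emb (\<omega> ^ j) * a) * S j)" using uS[of j] by simp
    also have "\<dots> = (R j * (1 - emb (\<omega> ^ j) * a)) * S j" by (simp add: mult.assoc)
    also have "\<dots> = S j" unfolding R_def using ainv_props(1)[OF inv[OF that]] by simp
    finally show ?thesis .
  qed
  have tm: "emb (\<omega> ^ j) * R j * R j * w * w = emb (\<omega> ^ j) * S j * S j" if "j < N" for j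
  proof -
    have "emb (\<omega> ^ j) * R j * R j * w * w = emb (\<omega> ^ j) * R j * (R j * w) * w"
      by (simp only: mult.assoc)
    also have "\<dots> = emb (\<omega> ^ j) * R j * S j * w" by (simp only: RS[OF that])
    also have "\<dots> = emb (\<omega> ^ j) * (R j * w) * S j" by (simp only: mult.assoc comm_w[of j])
    also have "\<dots> = emb (\<omega> ^ j) * S j * S j" by (simp only: RS[OF that])
    finally show ?thesis .
  qed
  have expand: "emb (\<omega> ^ j) * S j * S j
      = (\<Sum>m<N. \<Sum>m'<N. emb ((\<omega> ^ (1 + m + m')) ^ j) * a ^ (m + m'))" for j
  proof -
    have "S j * S j = (\<Sum>m<N. \<Sum>m'<N. emb ((\<omega> ^ j) ^ m * (\<omega> ^ j) ^ m') * a ^ (m + m'))"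
      unfolding S_def sum_product emb_terms_mult ..
    then have "emb (\<omega> ^ j) * S j * S j
        = (\<Sum>m<N. \<Sum>m'<N. emb (\<omega> ^ j) * (emb ((\<omega> ^ j) ^ m * (\<omega> ^ j) ^ m') * a ^ (m + m')))"
      by (simp add: mult.assoc sum_distrib_left)
    also have "\<dots> = (\<Sum>m<N. \<Sum>m'<N. emb ((\<omega> ^ (1 + m + m')) ^ j) * a ^ (m + m'))"
    proof (intro sum.cong refl)
      fix m m'
      have "\<omega> ^ j * ((\<omega> ^ j) ^ m * (\<omega> ^ j) ^ m') = (\<omega> ^ j) ^ (1 + m + m')"
        by (simp add: power_add)
      also have "\<dots> = (\<omega> ^ (1 + m + m')) ^ j" by (metis power_mult mult.commute)
      finally have "\<omega> ^ j * ((\<omega> ^ j) ^ m * (\<omega> ^ j) ^ m') = (\<omega> ^ (1 + m + m')) ^ j" .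
      then show "emb (\<omega> ^ j) * (emb ((\<omega> ^ j) ^ m * (\<omega> ^ j) ^ m') * a ^ (m + m'))
          = emb ((\<omega> ^ (1 + m + m')) ^ j) * a ^ (m + m')"
        by (simp add: mult.assoc[symmetric] emb_mult[symmetric])
    qed
    finally show ?thesis .
  qed
  have "(\<Sum>j<N. emb (\<omega> ^ j) * R j * R j) * w * w = (\<Sum>j<N. emb (\<omega> ^ j) * R j * R j * w * w)"
    by (simp add: sum_distrib_right)
  also have "\<dots> = (\<Sum>j<N. \<Sum>m<N. \<Sum>m'<N. emb ((\<omega> ^ (1 + m + m')) ^ j) * a ^ (m + m'))"
    using tm expand by simp
  also have "\<dots> = (\<Sum>m<N. \<Sum>m'<N. \<Sum>j<N. emb ((\<omega> ^ (1 + m + m')) ^ j) * a ^ (m + m'))"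
  proof -
    have "(\<Sum>j<N. \<Sum>m<N. \<Sum>m'<N. emb ((\<omega> ^ (1 + m + m')) ^ j) * a ^ (m + m'))
      = (\<Sum>m<N. \<Sum>j<N. \<Sum>m'<N. emb ((\<omega> ^ (1 + m + m')) ^ j) * a ^ (m + m'))"
      by (rule sum.swap)
    also have "\<dots> = (\<Sum>m<N. \<Sum>m'<N. \<Sum>j<N. emb ((\<omega> ^ (1 + m + m')) ^ j) * a ^ (m + m'))"
      by (intro sum.cong refl sum.swap)
    finally show ?thesis .
  qed
  also have "\<dots> = (\<Sum>m<N. \<Sum>m'<N. (if N dvd (1 + m + m') then of_nat N else 0) * a ^ (m + m'))"
  proof (intro sum.cong refl)
    fix m m'
    have "(\<Sum>j<N. emb ((\<omega> ^ (1 + m + m')) ^ j) * a ^ (m + m'))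
        = emb (\<Sum>j<N. (\<omega> ^ (1 + m + m')) ^ j) * a ^ (m + m')"
      by (simp add: emb_sum sum_distrib_right)
    also have "\<dots> = (if N dvd (1 + m + m') then of_nat N else 0) * a ^ (m + m')"
      unfolding \<omega>_def rou_sum[OF N] by (simp add: emb_of_nat)
    finally show "(\<Sum>j<N. emb ((\<omega> ^ (1 + m + m')) ^ j) * a ^ (m + m'))
        = (if N dvd (1 + m + m') then of_nat N else 0) * a ^ (m + m')" .
  qed
  also have "\<dots> = (\<Sum>m<N. of_nat N * a ^ (N - 1))"
  proof (intro sum.cong refl)
    fix m assume m: "m \<in> {..<N}"
    have c: "N dvd (1 + m + m') \<longleftrightarrow> m' = N - 1 - m" if "m' < N" for m'
    proof
      assume d: "N dvd (1 + m + m')"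
      have "0 < 1 + m + m'" "1 + m + m' < 2 * N" using m that by auto
      from d obtain q where q: "1 + m + m' = N * q" by (rule dvdE)
      have "q \<noteq> 0" using q \<open>0 < 1 + m + m'\<close> by (cases q) auto
      moreover have "q < 2" using q \<open>1 + m + m' < 2 * N\<close> by (simp add: mult.commute)
      ultimately have "q = 1" by linarith
      then have "1 + m + m' = N" using q by simp
      then show "m' = N - 1 - m" by simp
    next
      assume "m' = N - 1 - m" then have "1 + m + m' = N" using m by simp
      then show "N dvd (1 + m + m')" by simp
    qed
    have "(\<Sum>m'<N. (if N dvd (1 + m + m') then of_nat N else 0) * a ^ (m + m'))
        = (\<Sum>m'<N. if m' = N - 1 - m then of_nat N * a ^ (N - 1) else 0)"
    proof (intro sum.cong refl)
      fix m' assume "m' \<in> {..<N}"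
      then show "(if N dvd (1 + m + m') then of_nat N else 0) * a ^ (m + m')
          = (if m' = N - 1 - m then of_nat N * a ^ (N - 1) else 0)"
        using c[of m'] m by auto
    qed
    also have "\<dots> = of_nat N * a ^ (N - 1)" using m by (simp add: sum.delta)
    finally show "(\<Sum>m'<N. (if N dvd (1 + m + m') then of_nat N else 0) * a ^ (m + m'))
        = of_nat N * a ^ (N - 1)" .
  qed
  also have "\<dots> = of_nat (N * N) * a ^ (N - 1)" by (simp add: mult.assoc)
  finally show ?thesis unfolding R_def w_def .
qed

end

lemma half_le_aux: "(p::real) \<ge> 0 \<Longrightarrow> (1 / (2 * (p + 1))) * p \<le> 1/2"
  by (simp add: divide_simps)

lemma lt_aux: "(q::real) \<ge> 0 \<Longrightarrow> e > 0 \<Longrightarrow> q * (e / (q + 1)) < e"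
  by (simp add: divide_simps)

context cstar
begin

lemma resolvent_bounded:
  fixes y :: 'a
  assumes H: "\<And>\<mu>. cmod \<mu> \<le> r \<Longrightarrow> isinv (1 - emb \<mu> * y)"
  shows "\<exists>M. \<forall>\<mu>. cmod \<mu> \<le> r \<longrightarrow> norm (ainv (1 - emb \<mu> * y)) \<le> M"
proof -
  define f where "f \<mu> = ainv (1 - emb \<mu> * y)" for \<mu>
  have cont: "continuous_on (cball 0 r) f"
    unfolding continuous_on_iff
  proof (intro ballI allI impI)
    fix \<mu>0 :: complex and e :: real
    assume \<mu>0: "\<mu>0 \<in> cball 0 r" and e: "e > 0"
    define A where "A = norm (f \<mu>0)"
    define B where "B = norm y"
    have A0: "A \<ge> 0" and B0: "B \<ge> 0" unfolding A_def B_def by auto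
    define d where "d = min (1 / (2 * (A * B + 1))) (e / (2 * A\<^sup>2 * B + 1))"
    have dpos: "d > 0" unfolding d_def using A0 B0 e by (auto intro!: divide_pos_pos add_nonneg_pos)
    show "\<exists>d>0. \<forall>x'\<in>cball 0 r. dist x' \<mu>0 < d \<longrightarrow> dist (f x') (f \<mu>0) < e"
    proof (intro exI conjI ballI impI)
      show "d > 0" by (fact dpos)
      fix \<mu> assume \<mu>: "\<mu> \<in> cball 0 r" and dist: "dist \<mu> \<mu>0 < d"
      define h where "h = emb (\<mu>0 - \<mu>) * y"
      have nh: "norm h = cmod (\<mu> - \<mu>0) * B"
        unfolding h_def B_def norm_emb_mult by (simp add: norm_minus_commute)
      have dd: "cmod (\<mu> - \<mu>0) < d" using dist by (simp add: dist_norm)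
      have inv0: "isinv (1 - emb \<mu>0 * y)" using H \<mu>0 by simp
      have d1: "d \<le> 1 / (2 * (A * B + 1))" and d2: "d \<le> e / (2 * A\<^sup>2 * B + 1)"
        unfolding d_def by auto
      have "norm h * A \<le> d * B * A" unfolding nh using dd A0 B0
        by (intro mult_right_mono) auto
      also have "\<dots> = d * (A * B)" by (simp add: mult_ac)
      also have "\<dots> \<le> (1 / (2 * (A * B + 1))) * (A * B)" using d1 A0 B0
        by (intro mult_right_mono) auto
      also have "\<dots> \<le> 1/2" using half_le_aux[of "A * B"] A0 B0 by simp
      finally have small: "norm h * norm (ainv (1 - emb \<mu>0 * y)) \<le> 1/2"
        unfolding A_def f_def .
      have eq: "1 - emb \<mu>0 * y + h = 1 - emb \<mu> * y"
        unfolding h_def by (simp add: emb_diff left_diff_distrib)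
      have "norm (f \<mu> - f \<mu>0) \<le> 2 * A\<^sup>2 * norm h"
        using perturb(3)[OF inv0 small] unfolding eq f_def A_def .
      also have "\<dots> = (2 * A\<^sup>2 * B) * cmod (\<mu> - \<mu>0)" unfolding nh by (simp add: mult_ac)
      also have "\<dots> \<le> 2 * A\<^sup>2 * B * d" using dd A0 B0
        by (intro mult_left_mono) auto
      also have "\<dots> < e"
      proof -
        have "2 * A\<^sup>2 * B * d \<le> 2 * A\<^sup>2 * B * (e / (2 * A\<^sup>2 * B + 1))"
          using d2 A0 B0 by (intro mult_left_mono) auto
        also have "\<dots> < e" using lt_aux[of "2 * A\<^sup>2 * B" e] e A0 B0 by simp
        finally show ?thesis .
      qed
      finally show "dist (f \<mu>) (f \<mu>0) < e" by (simp add: dist_norm)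
    qed
  qed
  have "bounded (f ` cball 0 r)"
    by (rule compact_imp_bounded[OF compact_continuous_image[OF cont compact_cball]])
  then obtain M where M: "\<forall>z\<in>f ` cball 0 r. norm z \<le> M" unfolding bounded_iff by blast
  show ?thesis
  proof (intro exI allI impI)
    fix \<mu> :: complex assume "cmod \<mu> \<le> r"
    then have "\<mu> \<in> cball 0 r" by simp
    then show "norm (ainv (1 - emb \<mu> * y)) \<le> M" using M unfolding f_def by blast
  qed
qed

lemma norm_of_nat_mult: "norm (of_nat n * (x::'a)) = real n * norm x"
proof -
  have "of_nat n * x = of_real (real n) * x" by simp
  also have "\<dots> = real n *\<^sub>R x" by (rule scaleR_conv_of_real[symmetric])
  finally have "of_nat n * x = real n *\<^sub>R x" .
  then show ?thesis by simp
qed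

lemma decay_ineq:
  fixes y :: 'a
  assumes H: "\<And>\<mu>. cmod \<mu> \<le> r \<Longrightarrow> isinv (1 - emb \<mu> * y)"
    and M: "\<And>\<mu>. cmod \<mu> \<le> r \<Longrightarrow> norm (ainv (1 - emb \<mu> * y)) \<le> M"
    and N: "N > 0" and s: "0 \<le> s" "s \<le> r"
  shows "real N * (s ^ N * norm (y ^ N)) \<le> (r * norm y * M\<^sup>2) * (1 + s ^ N * norm (y ^ N))\<^sup>2"
proof -
  define \<omega> where "\<omega> = cis (2 * pi / real N)"
  define a where "a = emb (complex_of_real s) * y"
  have "cmod 0 \<le> r" using s by simp
  then have M0: "M \<ge> 0" using M[of 0] norm_ge_zero[of "ainv (1 - emb 0 * y)"] by linarith
  have ea: "emb (\<omega> ^ j) * a = emb (\<omega> ^ j * complex_of_real s) * y" for j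
    unfolding a_def by (simp add: emb_mult mult.assoc)
  have cm: "cmod (\<omega> ^ j * complex_of_real s) = s" for j
    unfolding \<omega>_def using s by (simp add: norm_mult norm_power)
  have inv: "isinv (1 - emb (\<omega> ^ j) * a)" for j
    unfolding ea using H cm s by simp
  have Rb: "norm (ainv (1 - emb (\<omega> ^ j) * a)) \<le> M" for j
    unfolding ea using M cm s by simp
  define T where "T = (\<Sum>j<N. emb (\<omega> ^ j) * ainv (1 - emb (\<omega> ^ j) * a) * ainv (1 - emb (\<omega> ^ j) * a))"
  have id: "T * (1 - a ^ N) * (1 - a ^ N) = of_nat (N * N) * a ^ (N - 1)"
    unfolding T_def \<omega>_def by (rule rou_identity[OF N]) (use inv in \<open>simp add: \<omega>_def\<close>)
  have nT: "norm T \<le> real N * M\<^sup>2"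
  proof -
    have "norm T \<le> (\<Sum>j<N. norm (emb (\<omega> ^ j) * ainv (1 - emb (\<omega> ^ j) * a) * ainv (1 - emb (\<omega> ^ j) * a)))"
      unfolding T_def by (rule norm_sum)
    also have "\<dots> \<le> (\<Sum>j<N. M\<^sup>2)"
    proof (rule sum_mono)
      fix j
      let ?R = "ainv (1 - emb (\<omega> ^ j) * a)"
      have "norm (emb (\<omega> ^ j) * ?R * ?R) \<le> norm (emb (\<omega> ^ j) * ?R) * norm ?R" by (rule norm_mult_ineq)
      also have "\<dots> = norm ?R * norm ?R" unfolding norm_emb_mult \<omega>_def by (simp add: norm_power)
      also have "\<dots> \<le> M * M" using Rb[of j] M0 by (intro mult_mono) auto
      finally show "norm (emb (\<omega> ^ j) * ?R * ?R) \<le> M\<^sup>2" by (simp add: power2_eq_square)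
    qed
    also have "\<dots> = real N * M\<^sup>2" by simp
    finally show ?thesis .
  qed
  define b where "b = a ^ N"
  have na: "norm a = s * norm y" unfolding a_def norm_emb_mult using s by simp
  have nb: "norm b = s ^ N * norm (y ^ N)"
    unfolding b_def a_def emb_mult_power norm_emb_mult using s by (simp add: norm_power)
  have aa: "a * a ^ (N - 1) = a ^ N" using N by (cases N) auto
  have "a * (T * (1 - b) * (1 - b)) = a * (of_nat (N * N) * a ^ (N - 1))"
    using id unfolding b_def by simp
  also have "\<dots> = of_nat (N * N) * (a * a ^ (N - 1))"
  proof -
    have "a * (of_nat (N * N) * a ^ (N - 1)) = (a * of_nat (N * N)) * a ^ (N - 1)"
      by (rule mult.assoc[symmetric])
    also have "\<dots> = (of_nat (N * N) * a) * a ^ (N - 1)" by (simp only: mult_of_nat_commute)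
    also have "\<dots> = of_nat (N * N) * (a * a ^ (N - 1))" by (rule mult.assoc)
    finally show ?thesis .
  qed
  also have "\<dots> = of_nat (N * N) * b" unfolding aa b_def ..
  finally have "a * (T * (1 - b) * (1 - b)) = of_nat (N * N) * b" .
  then have "real (N * N) * norm b = norm (a * (T * (1 - b) * (1 - b)))"
    using norm_of_nat_mult[of "N * N" b] by (simp only:)
  also have "\<dots> \<le> norm a * (norm T * norm (1 - b) * norm (1 - b))"
  proof -
    have "norm (T * (1 - b) * (1 - b)) \<le> norm (T * (1 - b)) * norm (1 - b)" by (rule norm_mult_ineq)
    also have "\<dots> \<le> (norm T * norm (1 - b)) * norm (1 - b)"
      by (intro mult_right_mono norm_mult_ineq norm_ge_zero)
    finally have "norm (T * (1 - b) * (1 - b)) \<le> norm T * norm (1 - b) * norm (1 - b)" .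
    then show ?thesis using norm_mult_ineq[of a "T * (1 - b) * (1 - b)"]
      by (meson mult_left_mono norm_ge_zero order_trans)
  qed
  also have "\<dots> \<le> (s * norm y) * ((real N * M\<^sup>2) * (1 + norm b) * (1 + norm b))"
  proof -
    have n1: "norm (1 - b) \<le> 1 + norm b" using norm_triangle_ineq4[of 1 b] by simp
    have "norm T * norm (1 - b) * norm (1 - b) \<le> (real N * M\<^sup>2) * (1 + norm b) * (1 + norm b)"
      using nT n1 by (intro mult_mono) auto
    then show ?thesis unfolding na using s by (intro mult_left_mono) auto
  qed
  also have "\<dots> \<le> (r * norm y) * ((real N * M\<^sup>2) * (1 + norm b) * (1 + norm b))"
    using s by (intro mult_right_mono) auto
  finally have "real N * (real N * norm b) \<le> real N * ((r * norm y * M\<^sup>2) * (1 + norm b)\<^sup>2)"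
    by (simp add: power2_eq_square mult_ac)
  then have "real N * norm b \<le> (r * norm y * M\<^sup>2) * (1 + norm b)\<^sup>2"
    using N by simp
  then show ?thesis unfolding nb .
qed

lemma power_decay:
  fixes y :: 'a
  assumes r: "r > 0" and H: "\<And>\<mu>. cmod \<mu> \<le> r \<Longrightarrow> isinv (1 - emb \<mu> * y)"
  shows "\<exists>C\<ge>0. \<forall>N. N > 0 \<longrightarrow> 4 * C < real N \<longrightarrow> r ^ N * norm (y ^ N) \<le> 4 * C / real N"
proof -
  obtain M where M: "\<And>\<mu>. cmod \<mu> \<le> r \<Longrightarrow> norm (ainv (1 - emb \<mu> * y)) \<le> M"
    using resolvent_bounded[OF H] by blast
  define C where "C = r * norm y * M\<^sup>2"
  have C0: "C \<ge> 0" unfolding C_def using r by simp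
  have D: "real N * (s ^ N * norm (y ^ N)) \<le> C * (1 + s ^ N * norm (y ^ N))\<^sup>2"
    if "N > 0" "0 \<le> s" "s \<le> r" for N s
    unfolding C_def by (rule decay_ineq[OF H M that])
  show ?thesis
  proof (intro exI[of _ C] conjI allI impI C0)
    fix N :: nat assume N: "N > 0" and NC: "4 * C < real N"
    define \<beta> where "\<beta> = norm (y ^ N)"
    have b0: "\<beta> \<ge> 0" unfolding \<beta>_def by simp
    show "r ^ N * norm (y ^ N) \<le> 4 * C / real N"
    proof (cases "r ^ N * \<beta> \<le> 1")
      case True
      have z0: "0 \<le> r ^ N * \<beta>" using r b0 by simp
      have "real N * (r ^ N * \<beta>) \<le> C * (1 + r ^ N * \<beta>)\<^sup>2"
        using D[OF N _ order_refl] r unfolding \<beta>_def by simp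
      also have "\<dots> \<le> C * 4"
      proof (intro mult_left_mono C0)
        have "(1 + r ^ N * \<beta>)\<^sup>2 \<le> 2\<^sup>2" using True z0 by (intro power_mono) auto
        then show "(1 + r ^ N * \<beta>)\<^sup>2 \<le> 4" by simp
      qed
      finally show ?thesis unfolding \<beta>_def using N by (simp add: field_simps)
    next
      case False
      then have bpos: "\<beta> > 0" using b0 r by (cases "\<beta> = 0") auto
      define s where "s = root N (1 / \<beta>)"
      have s0: "s \<ge> 0" unfolding s_def using bpos by (intro real_root_ge_zero) simp
      have sN: "s ^ N = 1 / \<beta>" unfolding s_def using N bpos by (simp add: real_root_pow_pos2)
      have sr: "s \<le> r"
      proof (rule ccontr)
        assume "\<not> s \<le> r"
        then have "r ^ N < s ^ N" using r N by (intro power_strict_mono) auto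
        then have "r ^ N * \<beta> < 1" using sN bpos by (simp add: field_simps)
        then show False using False by simp
      qed
      have "real N * (s ^ N * \<beta>) \<le> C * (1 + s ^ N * \<beta>)\<^sup>2"
        using D[OF N s0 sr] unfolding \<beta>_def .
      then have "real N \<le> C * 4" using sN bpos by simp
      then show ?thesis using NC by simp
    qed
  qed
qed

lemma sa_norm_le_spec:
  fixes y :: 'a
  assumes sa: "sa y" and t: "t \<ge> 0" and sp: "\<And>l. l \<in> cspectrum sc y \<Longrightarrow> cmod l \<le> t"
  shows "norm y \<le> t"
proof (rule ccontr)
  assume "\<not> norm y \<le> t"
  then have yt: "norm y > t" by simp
  define r where "r = 2 / (norm y + t)"
  have r0: "r > 0" unfolding r_def using yt t by simp
  have H: "isinv (1 - emb \<mu> * y)" if \<mu>: "cmod \<mu> \<le> r" for \<mu>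
  proof (cases "\<mu> = 0")
    case True then show ?thesis by simp
  next
    case False
    have "cmod (1 / \<mu>) = 1 / cmod \<mu>" by (simp add: norm_divide)
    also have "\<dots> \<ge> 1 / r" using \<mu> False by (simp add: frac_le)
    finally have "cmod (1 / \<mu>) \<ge> (norm y + t) / 2" unfolding r_def by simp
    then have "cmod (1 / \<mu>) > t" using yt by simp
    then have i1: "isinv (y - emb (1 / \<mu>))" using sp mem_spec by force
    have "emb (- \<mu>) * (y - emb (1 / \<mu>)) = 1 - emb \<mu> * y"
      using False by (simp add: right_diff_distrib emb_mult[symmetric] emb_minus)
    then show ?thesis using isinv_mult(1)[OF emb_isinv(1) i1, of "- \<mu>"] False by simp
  qed
  obtain C where C0: "C \<ge> 0"
    and C: "\<And>N. N > 0 \<Longrightarrow> 4 * C < real N \<Longrightarrow> r ^ N * norm (y ^ N) \<le> 4 * C / real N"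
    using power_decay[OF r0 H] by blast
  define k where "k = nat \<lceil>4 * C\<rceil>"
  define N :: nat where "N = 2 ^ k"
  have "real k \<ge> 4 * C" unfolding k_def by linarith
  moreover have "real k < real N" unfolding N_def using less_exp[of k] by linarith
  ultimately have NC: "4 * C < real N" by simp
  have N0: "N > 0" unfolding N_def by simp
  have "(r * norm y) ^ N = r ^ N * norm (y ^ N)"
    unfolding N_def sa_norm_pow2[OF sa] by (simp add: power_mult_distrib)
  also have "\<dots> \<le> 4 * C / real N" using C[OF N0 NC] .
  also have "\<dots> < 1" using NC N0 by simp
  finally have lt: "(r * norm y) ^ N < 1" .
  have "r * norm y > 1" unfolding r_def using yt t by (simp add: field_simps)
  then have "(r * norm y) ^ N \<ge> 1" by (simp add: one_le_power)
  then show False using lt by simp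
qed

end

lemma isinv_minus:
  fixes x :: "'a::ring_1"
  shows "isinv (- x) \<longleftrightarrow> isinv x"
proof -
  have "isinv (- x)" if "isinv x" for x :: 'a
    using that unfolding isinv_def by (metis minus_mult_minus)
  from this[of x] this[of "- x"] show ?thesis by auto
qed

context cstar
begin

abbreviation pos :: "'a \<Rightarrow> bool" where "pos x \<equiv> positive_el sc st x"

lemma spec_reflect: "l \<in> cspectrum sc x \<longleftrightarrow> (c - l) \<in> cspectrum sc (emb c - x)"
proof -
  have "emb c - x - emb (c - l) = - (x - emb l)" by (simp add: emb_diff)
  then show ?thesis unfolding mem_spec using isinv_minus by metis
qed

lemma sa_of_real: "sa (of_real t - x) \<longleftrightarrow> sa x"
proof -
  have "st (of_real t) = of_real t" using st_emb[of "complex_of_real t"] emb_of_real by simp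
  then have "st (of_real t - x) = of_real t - st x" by (simp add: st_diff)
  then show ?thesis unfolding self_adjoint_def by auto
qed

lemma pos_char:
  assumes sa: "sa x" and t: "norm x \<le> t"
  shows "pos x \<longleftrightarrow> norm (of_real t - x) \<le> t"
proof
  assume p: "pos x"
  have t0: "t \<ge> 0" using t norm_ge_zero order_trans by blast
  show "norm (of_real t - x) \<le> t"
  proof (rule sa_norm_le_spec)
    show "sa (of_real t - x)" using sa sa_of_real by blast
    show "t \<ge> 0" by (fact t0)
    fix l assume l: "l \<in> cspectrum sc (of_real t - x)"
    have "complex_of_real t - l \<in> cspectrum sc x"
      using spec_reflect[of "complex_of_real t - l" x "complex_of_real t"] l emb_of_real by simp
    then have a: "Im (complex_of_real t - l) = 0" "Re (complex_of_real t - l) \<ge> 0"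
      "cmod (complex_of_real t - l) \<le> norm x"
      using p spec_le unfolding positive_el_def by auto
    then have "Im l = 0" "Re l \<le> t" "t - Re l \<le> t" using t
      by (auto simp: cmod_eq_Re)
    then have "l = complex_of_real (Re l)" "0 \<le> Re l" "Re l \<le> t"
      by (auto simp: complex_eq_iff)
    then show "cmod l \<le> t" by (metis abs_of_nonneg norm_of_real)
  qed
next
  assume n: "norm (of_real t - x) \<le> t"
  have "\<forall>l\<in>cspectrum sc x. Im l = 0 \<and> 0 \<le> Re l"
  proof
    fix l assume l: "l \<in> cspectrum sc x"
    have il: "Im l = 0" using sa_spec_real[OF sa l] .
    have "complex_of_real t - l \<in> cspectrum sc (of_real t - x)"
      using spec_reflect[of l x "complex_of_real t"] l emb_of_real by simp
    then have "cmod (complex_of_real t - l) \<le> t" using spec_le n order_trans by blast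
    moreover have "complex_of_real t - l = complex_of_real (t - Re l)"
      using il by (simp add: complex_eq_iff)
    ultimately have "\<bar>t - Re l\<bar> \<le> t" by (metis norm_of_real)
    then show "Im l = 0 \<and> 0 \<le> Re l" using il by linarith
  qed
  then show "pos x" unfolding positive_el_def using sa by simp
qed

lemma pos_add:
  assumes "pos a" "pos b" shows "pos (a + b)"
proof -
  have sa: "sa a" "sa b" using assms unfolding positive_el_def by auto
  then have sab: "sa (a + b)" unfolding self_adjoint_def by (simp add: st_add)
  have na: "norm (of_real (norm a) - a) \<le> norm a" using pos_char[OF sa(1) order_refl] assms(1) by simp
  have nb: "norm (of_real (norm b) - b) \<le> norm b" using pos_char[OF sa(2) order_refl] assms(2) by simp
  have t: "norm (a + b) \<le> norm a + norm b" by (rule norm_triangle_ineq)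
  have "of_real (norm a + norm b) - (a + b) = (of_real (norm a) - a) + (of_real (norm b) - b)"
    by (simp add: algebra_simps)
  then have "norm (of_real (norm a + norm b) - (a + b))
      = norm ((of_real (norm a) - a) + (of_real (norm b) - b))" by (simp only:)
  also have "\<dots> \<le> norm (of_real (norm a) - a) + norm (of_real (norm b) - b)"
    by (rule norm_triangle_ineq)
  also have "\<dots> \<le> norm a + norm b" using na nb by (rule add_mono)
  finally have "norm (of_real (norm a + norm b) - (a + b)) \<le> norm a + norm b" .
  then show ?thesis using pos_char[OF sab t] by simp
qed

lemma pos_zero: "pos 0"
  using pos_char[of 0 0] unfolding self_adjoint_def by simp

lemma sa_limit:
  assumes "\<And>n. sa (q n)" "q \<longlonglongrightarrow> Q" shows "sa Q"
proof -
  have "(\<lambda>n. st (q n)) \<longlonglongrightarrow> st Q" using st_continuous[OF assms(2)] .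
  then have "q \<longlonglongrightarrow> st Q" using assms(1) unfolding self_adjoint_def by simp
  then show ?thesis unfolding self_adjoint_def using LIMSEQ_unique assms(2) by metis
qed

lemma pos_limit:
  assumes p: "\<And>n. pos (q n)" and lim: "q \<longlonglongrightarrow> Q" shows "pos Q"
proof -
  have sa: "\<And>n. sa (q n)" using p unfolding positive_el_def by auto
  have saQ: "sa Q" using sa_limit[OF sa lim] .
  obtain B where B: "\<And>n. norm (q n) \<le> B"
    using convergent_imp_Bseq[OF convergentI[OF lim]] unfolding Bseq_def by auto
  have nQ: "norm Q \<le> B"
    using tendsto_norm[OF lim] B by (intro LIMSEQ_le_const2) auto
  have "norm (of_real B - q n) \<le> B" for n using pos_char[OF sa B] p by simp
  moreover have "(\<lambda>n. norm (of_real B - q n)) \<longlonglongrightarrow> norm (of_real B - Q)"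
    by (intro tendsto_norm tendsto_diff tendsto_const lim)
  ultimately have "norm (of_real B - Q) \<le> B" by (intro LIMSEQ_le_const2) auto
  then show ?thesis using pos_char[OF saQ nQ] by simp
qed

lemma sa_mult_self: "sa x \<Longrightarrow> sa (x * x)"
  unfolding self_adjoint_def by (simp add: st_mult)

lemma pos_square: assumes "sa x" shows "pos (x * x)"
proof -
  have "\<forall>l\<in>cspectrum sc (x * x). Im l = 0 \<and> 0 \<le> Re l"
  proof
    fix l assume "l \<in> cspectrum sc (x * x)"
    then have "\<not> isinv (x * x - emb l)" using mem_spec by simp
    then show "Im l = 0 \<and> 0 \<le> Re l" using sq_positive[OF assms] by blast
  qed
  then show ?thesis unfolding positive_el_def using sa_mult_self[OF assms] by simp
qed

lemma pos_one_minus: assumes "pos x" "norm x \<le> 1" shows "norm (1 - x) \<le> 1"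
proof -
  have "sa x" using assms unfolding positive_el_def by auto
  then show ?thesis using pos_char[OF _ assms(2)] assms(1) by simp
qed

lemma pos_quad:
  assumes p: "pos x" and n: "norm x \<le> 1"
  shows "norm (x - x * x) \<le> 1/4"
proof (rule sa_norm_le_spec)
  have sa: "sa x" using p unfolding positive_el_def by auto
  show "sa (x - x * x)" using sa unfolding self_adjoint_def by (simp add: st_diff st_mult)
  show "(0::real) \<le> 1/4" by simp
  fix l assume l: "l \<in> cspectrum sc (x - x * x)"
  show "cmod l \<le> 1/4"
  proof (rule ccontr)
    assume big: "\<not> cmod l \<le> 1/4"
    define \<alpha> where "\<alpha> = (1 + csqrt (1 - 4 * l)) / 2"
    define \<beta> where "\<beta> = (1 - csqrt (1 - 4 * l)) / 2"
    have sq: "csqrt (1 - 4 * l) * csqrt (1 - 4 * l) = 1 - 4 * l"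
      using power2_csqrt[of "1 - 4 * l"] by (simp add: power2_eq_square)
    have ab: "\<alpha> + \<beta> = 1" unfolding \<alpha>_def \<beta>_def by (simp add: field_simps)
    have abl: "\<alpha> * \<beta> = l" unfolding \<alpha>_def \<beta>_def using sq by (simp add: field_simps)
    have notin: "isinv (x - emb \<gamma>)" if g: "\<gamma> * (1 - \<gamma>) = l" for \<gamma>
    proof (rule ccontr)
      assume "\<not> isinv (x - emb \<gamma>)"
      then have gs: "\<gamma> \<in> cspectrum sc x" using mem_spec by simp
      then have "Im \<gamma> = 0" "Re \<gamma> \<ge> 0" "cmod \<gamma> \<le> 1"
        using p spec_le[OF gs] n unfolding positive_el_def by auto
      then have ge: "\<gamma> = complex_of_real (Re \<gamma>)" "0 \<le> Re \<gamma>" "Re \<gamma> \<le> 1"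
        by (auto simp: complex_eq_iff cmod_eq_Re)
      define g where "g = Re \<gamma>"
      have lg: "l = complex_of_real (g * (1 - g))" unfolding g_def
        using g ge(1) by (metis of_real_1 of_real_diff of_real_mult)
      have g1: "0 \<le> g * (1 - g)" unfolding g_def using ge by simp
      have "g * (1 - g) = 1/4 - (g - 1/2)\<^sup>2" by (simp add: power2_eq_square algebra_simps)
      then have g2: "g * (1 - g) \<le> 1/4" using zero_le_power2[of "g - 1/2"] by linarith
      have "cmod l = \<bar>g * (1 - g)\<bar>" unfolding lg by (rule norm_of_real)
      then have "cmod l = g * (1 - g)" using g1 by simp
      then have "cmod l \<le> 1/4" using g2 by simp
      then show False using big by simp
    qed
    have i1: "isinv (x - emb \<alpha>)" using notin[of \<alpha>] abl ab by (metis add_diff_cancel_left')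
    have i2: "isinv (x - emb \<beta>)" using notin[of \<beta>] abl ab
      by (metis add_diff_cancel_right' mult.commute)
    have "(x - emb \<alpha>) * (x - emb \<beta>) = x * x - (x * emb \<beta> + emb \<alpha> * x) + emb \<alpha> * emb \<beta>"
      by (simp add: left_diff_distrib right_diff_distrib)
    also have "x * emb \<beta> + emb \<alpha> * x = emb (\<alpha> + \<beta>) * x"
      using emb_central[of \<beta> x] by (simp add: emb_add distrib_right)
    also have "emb \<alpha> * emb \<beta> = emb l" using abl emb_mult by metis
    finally have "(x - emb \<alpha>) * (x - emb \<beta>) = - (x - x * x - emb l)" using ab by simp
    then have "isinv (- (x - x * x - emb l))" using isinv_mult(1)[OF i1 i2] by simp
    then have "isinv (x - x * x - emb l)" using isinv_minus by blast
    then show False using l mem_spec by simp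
  qed
qed

end

context cstar
begin

lemma pos_sa: "pos x \<Longrightarrow> sa x" unfolding positive_el_def by simp

lemma pos_chain:
  assumes "\<And>n. pos (x (Suc n) - x n)" "n \<le> m"
  shows "pos (x m - x n)"
  using assms(2)
proof (induction m rule: dec_induct)
  case base then show ?case using pos_zero by simp
next
  case (step m)
  have "x (Suc m) - x n = (x (Suc m) - x m) + (x m - x n)" by simp
  then show ?case using pos_add[OF assms(1)[of m] step.IH] by simp
qed

lemma mono_limit_sup:
  assumes sa: "\<And>n. sa (x n)" and inc: "\<And>n. pos (x (Suc n) - x n)" and lim: "x \<longlonglongrightarrow> X"
  shows "is_sa_sup sc st x X" "\<And>n. sa_le sc st (x n) (x (Suc n))" "bounded (range x)"
proof -
  have saX: "sa X" using sa_limit[OF sa lim] .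
  have up: "sa_le sc st (x n) X" for n
  proof -
    have l1: "(\<lambda>m. x (m + n) - x n) \<longlonglongrightarrow> X - x n"
      by (intro tendsto_diff tendsto_const LIMSEQ_ignore_initial_segment[OF lim])
    have p1: "pos (x (m + n) - x n)" for m using pos_chain[where x=x and n=n and m="m + n", OF inc] by simp
    have "pos (X - x n)" by (rule pos_limit[OF p1 l1])
    then show ?thesis unfolding sa_le_def using sa saX by simp
  qed
  have least: "sa_le sc st X u" if "sa u" "\<forall>n. sa_le sc st (x n) u" for u
  proof -
    have l1: "(\<lambda>n. u - x n) \<longlonglongrightarrow> u - X" by (intro tendsto_diff tendsto_const lim)
    have p1: "pos (u - x n)" for n using that(2) unfolding sa_le_def by simp
    have "pos (u - X)" by (rule pos_limit[OF p1 l1])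
    then show ?thesis unfolding sa_le_def using that(1) saX by simp
  qed
  show "is_sa_sup sc st x X" unfolding is_sa_sup_def using saX up least by blast
  show "sa_le sc st (x n) (x (Suc n))" for n unfolding sa_le_def using sa inc by simp
  show "bounded (range x)"
    using convergent_imp_Bseq[OF convergentI[OF lim]] Elementary_Normed_Spaces.Bseq_eq_bounded by blast
qed

end

locale cstar_V = cstar sc st for sc :: "complex \<Rightarrow> 'a::{real_normed_algebra_1,banach} \<Rightarrow> 'a" and st +
  fixes V :: "'a set"
  assumes sig: "sigma_subspace sc st V"
    and sqV: "\<And>a. a \<in> V \<Longrightarrow> sa a \<Longrightarrow> a * a \<in> V"
begin

lemma V0: "0 \<in> V" using sig unfolding sigma_subspace_def by blast
lemma Vadd: "x \<in> V \<Longrightarrow> y \<in> V \<Longrightarrow> x + y \<in> V" using sig unfolding sigma_subspace_def by blast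
lemma Vsc: "x \<in> V \<Longrightarrow> sc c x \<in> V" using sig unfolding sigma_subspace_def by blast
lemma Vst: "x \<in> V \<Longrightarrow> st x \<in> V" using sig unfolding sigma_subspace_def by blast
lemma Vsup: "(\<And>n. x n \<in> V) \<Longrightarrow> (\<And>n. sa (x n)) \<Longrightarrow> (\<And>n. sa_le sc st (x n) (x (Suc n)))
     \<Longrightarrow> bounded (range x) \<Longrightarrow> is_sa_sup sc st x s \<Longrightarrow> s \<in> V"
  using sig unfolding sigma_subspace_def by blast

lemma Vemb: "x \<in> V \<Longrightarrow> emb c * x \<in> V" using Vsc sc_emb by metis

lemma VscaleR: "x \<in> V \<Longrightarrow> r *\<^sub>R x \<in> V" using Vsc sc_real by metis

lemma Vminus: "x \<in> V \<Longrightarrow> - x \<in> V" using VscaleR[of x "-1"] by simp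

lemma Vdiff: "x \<in> V \<Longrightarrow> y \<in> V \<Longrightarrow> x - y \<in> V"
  using Vadd[OF _ Vminus] by (metis diff_conv_add_uminus)

lemma Vsum: "(\<And>i. i \<in> A \<Longrightarrow> f i \<in> V) \<Longrightarrow> sum f A \<in> V"
  by (induction A rule: infinite_finite_induct) (auto simp: V0 Vadd)

lemma mono_limit_V:
  assumes V: "\<And>n. x n \<in> V" and sa: "\<And>n. sa (x n)" and inc: "\<And>n. pos (x (Suc n) - x n)"
    and lim: "x \<longlonglongrightarrow> X"
  shows "X \<in> V"
  using Vsup[OF V sa mono_limit_sup(2)[OF sa inc lim] mono_limit_sup(3)[OF sa inc lim]
      mono_limit_sup(1)[OF sa inc lim]] .

end

context cstar_V
begin

lemma sa_scaleR: "sa x \<Longrightarrow> sa (r *\<^sub>R x)"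
  unfolding self_adjoint_def by (simp add: st_scaleR)

lemma sa_add: "sa x \<Longrightarrow> sa y \<Longrightarrow> sa (x + y)"
  unfolding self_adjoint_def by (simp add: st_add)

lemma sa_diff: "sa x \<Longrightarrow> sa y \<Longrightarrow> sa (x - y)"
  unfolding self_adjoint_def by (simp add: st_diff)

lemma decomp:
  assumes cV: "c \<in> V" and sac: "sa c"
  shows "\<exists>p q r. p \<in> V \<and> q \<in> V \<and> r \<in> V \<and> pos p \<and> pos q \<and> sa r \<and> c = p - q + r
    \<and> norm p \<le> norm c \<and> norm q \<le> norm c \<and> norm r \<le> norm c / 2"
proof (cases "c = 0")
  case True
  then show ?thesis using V0 pos_zero unfolding self_adjoint_def by (intro exI[of _ 0]) auto
next
  case False
  define \<delta> where "\<delta> = norm c"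
  have d0: "\<delta> > 0" unfolding \<delta>_def using False by simp
  define w where "w = (1 / \<delta>) *\<^sub>R c"
  define x where "x = w * w"
  have saw: "sa w" unfolding w_def using sa_scaleR[OF sac] .
  have wV: "w \<in> V" unfolding w_def using VscaleR[OF cV] .
  have xV: "x \<in> V" unfolding x_def using sqV[OF wV saw] .
  have px: "pos x" unfolding x_def using pos_square[OF saw] .
  have sax: "sa x" using pos_sa[OF px] .
  have nw: "norm w = 1" unfolding w_def \<delta>_def using False by simp
  have nx: "norm x = 1" unfolding x_def using sa_norm_sq[OF saw] nw by simp
  have xcc: "x = (1 / \<delta>)\<^sup>2 *\<^sub>R (c * c)" unfolding x_def w_def by (simp add: power2_eq_square)
  have dd: "\<delta>\<^sup>2 * (1 / \<delta>)\<^sup>2 = 1" using d0 by (simp add: power2_eq_square)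
  have cc: "c * c = \<delta>\<^sup>2 *\<^sub>R x" unfolding xcc using dd by simp
  have xc: "x * c = c * x" unfolding xcc by (simp add: mult.assoc)
  define \<epsilon> where "\<epsilon> = sqrt \<delta>"
  have e0: "\<epsilon> > 0" unfolding \<epsilon>_def using d0 by simp
  have ee: "\<epsilon> * \<epsilon> = \<delta>" unfolding \<epsilon>_def using d0 by simp
  define A where "A = (\<epsilon> / 2) *\<^sub>R x"
  define B where "B = (1 / (2 * \<epsilon>)) *\<^sub>R c"
  have AB: "A * B = (1/4) *\<^sub>R (x * c)" unfolding A_def B_def using e0 by simp
  have BA: "B * A = (1/4) *\<^sub>R (x * c)" unfolding A_def B_def using e0 xc by simp
  have saA: "sa A" unfolding A_def using sa_scaleR[OF sax] .
  have saB: "sa B" unfolding B_def using sa_scaleR[OF sac] .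
  have AV: "A \<in> V" unfolding A_def using VscaleR[OF xV] .
  have BV: "B \<in> V" unfolding B_def using VscaleR[OF cV] .
  define p where "p = (A + B) * (A + B)"
  define q where "q = (A - B) * (A - B)"
  define r where "r = c - x * c"
  have pV: "p \<in> V" unfolding p_def using sqV[OF Vadd[OF AV BV] sa_add[OF saA saB]] .
  have qV: "q \<in> V" unfolding q_def using sqV[OF Vdiff[OF AV BV] sa_diff[OF saA saB]] .
  have pp: "pos p" unfolding p_def using pos_square[OF sa_add[OF saA saB]] .
  have pq: "pos q" unfolding q_def using pos_square[OF sa_diff[OF saA saB]] .
  have "p - q = 2 *\<^sub>R (A * B + B * A)" unfolding p_def q_def
    by (simp add: algebra_simps scaleR_2)
  also have "\<dots> = x * c" unfolding AB BA by (simp add: scaleR_add_right[symmetric])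
  finally have pmq: "p - q = x * c" .
  have ceq: "c = p - q + r" unfolding r_def pmq by simp
  have rV: "r \<in> V" unfolding r_def pmq[symmetric] using Vdiff[OF cV Vdiff[OF pV qV]] .
  have sar: "sa r" unfolding r_def self_adjoint_def using sac sax xc
    unfolding self_adjoint_def by (simp add: st_diff st_mult)
  have nA: "norm A = \<epsilon> / 2" unfolding A_def using nx e0 by simp
  have nB: "norm B = \<epsilon> / 2" unfolding B_def using e0 ee \<delta>_def
    by (simp add: field_simps)
  have npq: "norm (A + B) \<le> \<epsilon>" "norm (A - B) \<le> \<epsilon>"
    using norm_triangle_ineq[of A B] norm_triangle_ineq4[of A B] nA nB by auto
  have "norm p \<le> norm (A + B) * norm (A + B)" unfolding p_def by (rule norm_mult_ineq)
  also have "\<dots> \<le> \<epsilon> * \<epsilon>" using npq e0 by (intro mult_mono) auto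
  finally have np: "norm p \<le> norm c" using ee \<delta>_def by simp
  have "norm q \<le> norm (A - B) * norm (A - B)" unfolding q_def by (rule norm_mult_ineq)
  also have "\<dots> \<le> \<epsilon> * \<epsilon>" using npq e0 by (intro mult_mono) auto
  finally have nq: "norm q \<le> norm c" using ee \<delta>_def by simp
  have r1: "r = (1 - x) * c" unfolding r_def by (simp add: left_diff_distrib)
  have c1x: "c * (1 - x) = (1 - x) * c" using xc by (simp add: left_diff_distrib right_diff_distrib)
  have "r * r = (1 - x) * (c * (1 - x)) * c" unfolding r1 by (simp add: mult.assoc)
  also have "\<dots> = (1 - x) * (1 - x) * (c * c)" unfolding c1x by (simp add: mult.assoc)
  also have "\<dots> = \<delta>\<^sup>2 *\<^sub>R ((1 - x) * ((1 - x) * x))" unfolding cc by (simp add: mult.assoc)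
  also have "\<dots> = \<delta>\<^sup>2 *\<^sub>R ((1 - x) * (x - x * x))" by (simp add: left_diff_distrib)
  finally have rr: "r * r = \<delta>\<^sup>2 *\<^sub>R ((1 - x) * (x - x * x))" .
  have "norm ((1 - x) * (x - x * x)) \<le> norm (1 - x) * norm (x - x * x)" by (rule norm_mult_ineq)
  also have "\<dots> \<le> 1 * (1/4)"
    using pos_one_minus[OF px] pos_quad[OF px] nx by (intro mult_mono) auto
  finally have n14: "norm ((1 - x) * (x - x * x)) \<le> 1/4" by simp
  have "(norm r)\<^sup>2 = norm (r * r)" using sa_norm_sq[OF sar] by simp
  also have "\<dots> = \<delta>\<^sup>2 * norm ((1 - x) * (x - x * x))" unfolding rr by simp
  also have "\<dots> \<le> \<delta>\<^sup>2 * (1/4)" using n14 by (intro mult_left_mono) auto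
  also have "\<dots> = (\<delta> / 2)\<^sup>2" by (simp add: power2_eq_square)
  finally have sq: "(norm r)\<^sup>2 \<le> (\<delta> / 2)\<^sup>2" .
  have "norm r \<le> \<delta> / 2" using power2_le_imp_le[OF sq] d0 by simp
  then have nr: "norm r \<le> norm c / 2" unfolding \<delta>_def .
  show ?thesis
    by (intro exI[of _ p] exI[of _ q] exI[of _ r] conjI pV qV rV pp pq sar ceq np nq nr)
qed

end

primrec iter_seq :: "('a::plus \<Rightarrow> 'a) \<Rightarrow> (nat \<Rightarrow> 'a) \<Rightarrow> nat \<Rightarrow> 'a" where
  "iter_seq F d 0 = d 0"
| "iter_seq F d (Suc m) = F (iter_seq F d m) + d (Suc m)"

context cstar_V
begin

lemma sa_sum: "(\<And>i. i \<in> A \<Longrightarrow> sa (f i)) \<Longrightarrow> sa (sum f A)"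
  unfolding self_adjoint_def by (simp add: st_sum)

lemma sa_closure:
  assumes sah: "sa h" and hV: "\<And>n. hs n \<in> V" and sas: "\<And>n. sa (hs n)" and lim: "hs \<longlonglongrightarrow> h"
  shows "h \<in> V"
proof -
  have "\<forall>k. \<exists>n. norm (hs n - h) < (1/4) ^ k"
  proof
    fix k :: nat
    have "(0::real) < (1/4) ^ k" by simp
    from LIMSEQ_D[OF lim this] show "\<exists>n. norm (hs n - h) < (1/4) ^ k" by blast
  qed
  then obtain nf where nf: "\<And>k. norm (hs (nf k) - h) < (1/4) ^ k" using choice by metis
  define g where "g k = hs (nf k)" for k
  have gV: "g k \<in> V" and sag: "sa (g k)" and ng: "norm (g k - h) < (1/4) ^ k" for k
    unfolding g_def using hV sas nf by auto
  define d where "d k = g (Suc k) - g k" for k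
  have dV: "d k \<in> V" for k unfolding d_def using Vdiff gV by simp
  have sad: "sa (d k)" for k unfolding d_def using sa_diff sag by simp
  have nd: "norm (d k) \<le> 2 * (1/4) ^ k" for k
  proof -
    have "d k = (g (Suc k) - h) - (g k - h)" unfolding d_def by simp
    then have "norm (d k) \<le> norm (g (Suc k) - h) + norm (g k - h)"
      using norm_triangle_ineq4 by metis
    also have "\<dots> \<le> (1/4) ^ Suc k + (1/4) ^ k" using ng[of k] ng[of "Suc k"] by simp
    also have "\<dots> \<le> 2 * (1/4) ^ k" by simp
    finally show ?thesis .
  qed
  define Pr where "Pr c t \<longleftrightarrow> fst t \<in> V \<and> fst (snd t) \<in> V \<and> snd (snd t) \<in> V \<and> pos (fst t)
    \<and> pos (fst (snd t)) \<and> sa (snd (snd t)) \<and> c = fst t - fst (snd t) + snd (snd t)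
    \<and> norm (fst t) \<le> norm c \<and> norm (fst (snd t)) \<le> norm c \<and> norm (snd (snd t)) \<le> norm c / 2"
    for c :: 'a and t :: "'a \<times> 'a \<times> 'a"
  define D where "D c = (SOME t. Pr c t)" for c
  have Dp: "Pr c (D c)" if cV: "c \<in> V" and csa: "sa c" for c
  proof -
    obtain p q r where "p \<in> V \<and> q \<in> V \<and> r \<in> V \<and> pos p \<and> pos q \<and> sa r \<and> c = p - q + r
      \<and> norm p \<le> norm c \<and> norm q \<le> norm c \<and> norm r \<le> norm c / 2"
      using decomp[OF cV csa] by blast
    then have "Pr c (p, q, r)" unfolding Pr_def fst_conv snd_conv .
    then show ?thesis unfolding D_def by (rule someI)
  qed
  define RR where "RR c = snd (snd (D c))" for c
  define cs where "cs = iter_seq RR d"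
  have inv: "cs m \<in> V \<and> sa (cs m) \<and> norm (cs m) \<le> 2 * (3/4) ^ m" for m
  proof (induction m)
    case 0
    show ?case unfolding cs_def using dV sad nd[of 0] by simp
  next
    case (Suc m)
    have P: "Pr (cs m) (D (cs m))" using Dp Suc.IH by blast
    have rV: "RR (cs m) \<in> V" and rsa: "sa (RR (cs m))" and rn: "norm (RR (cs m)) \<le> norm (cs m) / 2"
      using P unfolding Pr_def RR_def by auto
    have eq: "cs (Suc m) = RR (cs m) + d (Suc m)" unfolding cs_def by simp
    have "norm (cs (Suc m)) \<le> norm (RR (cs m)) + norm (d (Suc m))"
      unfolding eq by (rule norm_triangle_ineq)
    also have "\<dots> \<le> (3/4) ^ m + 2 * (1/4) ^ Suc m" using rn Suc.IH nd[of "Suc m"] by simp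
    also have "\<dots> \<le> 2 * (3/4) ^ Suc m"
    proof -
      have "(1/4::real) ^ m \<le> (3/4) ^ m" by (intro power_mono) auto
      then show ?thesis by simp
    qed
    finally show ?case unfolding eq using Vadd[OF rV dV] sa_add[OF rsa sad] by simp
  qed
  define Pm where "Pm m = fst (D (cs m))" for m
  define Qm where "Qm m = fst (snd (D (cs m)))" for m
  have PD: "Pr (cs m) (D (cs m))" for m using Dp inv by blast
  have PmV: "Pm m \<in> V" and Pmp: "pos (Pm m)" and QmV: "Qm m \<in> V" and Qmp: "pos (Qm m)"
    and PQ: "Pm m - Qm m = cs m - RR (cs m)"
    and nPm: "norm (Pm m) \<le> 2 * (3/4) ^ m" and nQm: "norm (Qm m) \<le> 2 * (3/4) ^ m" for m
  proof -
    have P: "Pr (cs m) (D (cs m))" by (rule PD)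
    then show "Pm m \<in> V" "pos (Pm m)" "Qm m \<in> V" "pos (Qm m)"
      unfolding Pr_def Pm_def Qm_def by auto
    show "Pm m - Qm m = cs m - RR (cs m)"
      using P unfolding Pr_def Pm_def Qm_def RR_def by (simp add: algebra_simps)
    show "norm (Pm m) \<le> 2 * (3/4) ^ m" "norm (Qm m) \<le> 2 * (3/4) ^ m"
      using P inv[of m] unfolding Pr_def Pm_def Qm_def by auto
  qed
  have tele: "(\<Sum>m<M. Pm m) - (\<Sum>m<M. Qm m) = g (Suc M) - g 0 - cs M" for M
  proof (induction M)
    case 0
    show ?case unfolding cs_def d_def by simp
  next
    case (Suc M)
    have rr: "RR (cs M) = cs (Suc M) - d (Suc M)" unfolding cs_def by simp
    have "(\<Sum>m<Suc M. Pm m) - (\<Sum>m<Suc M. Qm m) = ((\<Sum>m<M. Pm m) - (\<Sum>m<M. Qm m)) + (Pm M - Qm M)"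
      by (simp add: algebra_simps)
    also have "\<dots> = g (Suc (Suc M)) - g 0 - cs (Suc M)"
      unfolding Suc.IH PQ rr d_def by (simp add: algebra_simps)
    finally show ?case .
  qed
  have geo: "summable (\<lambda>m. 2 * (3/4::real) ^ m)" by simp
  have sP: "summable Pm"
    by (rule summable_norm_cancel, rule summable_comparison_test[OF _ geo]) (use nPm in simp)
  have sQ: "summable Qm"
    by (rule summable_norm_cancel, rule summable_comparison_test[OF _ geo]) (use nQm in simp)
  have limP: "(\<lambda>n. \<Sum>m<n. Pm m) \<longlonglongrightarrow> suminf Pm" by (rule summable_LIMSEQ[OF sP])
  have limQ: "(\<lambda>n. \<Sum>m<n. Qm m) \<longlonglongrightarrow> suminf Qm" by (rule summable_LIMSEQ[OF sQ])
  have SPV: "suminf Pm \<in> V"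
  proof (rule mono_limit_V[OF _ _ _ limP])
    show "(\<Sum>m<n. Pm m) \<in> V" for n by (rule Vsum) (rule PmV)
    show "sa (\<Sum>m<n. Pm m)" for n by (rule sa_sum) (rule pos_sa[OF Pmp])
    show "pos ((\<Sum>m<Suc n. Pm m) - (\<Sum>m<n. Pm m))" for n using Pmp by simp
  qed
  have SQV: "suminf Qm \<in> V"
  proof (rule mono_limit_V[OF _ _ _ limQ])
    show "(\<Sum>m<n. Qm m) \<in> V" for n by (rule Vsum) (rule QmV)
    show "sa (\<Sum>m<n. Qm m)" for n by (rule sa_sum) (rule pos_sa[OF Qmp])
    show "pos ((\<Sum>m<Suc n. Qm m) - (\<Sum>m<n. Qm m))" for n using Qmp by simp
  qed
  have gl: "g \<longlonglongrightarrow> h"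
  proof -
    have l0: "(\<lambda>k. (1/4::real) ^ k) \<longlonglongrightarrow> 0" by (rule LIMSEQ_power_zero) simp
    have ev: "\<forall>\<^sub>F k in sequentially. norm (g k - h) \<le> (1/4) ^ k"
      using ng by (simp add: less_imp_le)
    have "(\<lambda>k. g k - h) \<longlonglongrightarrow> 0" by (rule Lim_null_comparison[OF ev l0])
    then show ?thesis by (rule LIM_zero_cancel)
  qed
  have cl: "cs \<longlonglongrightarrow> 0"
  proof -
    have l0: "(\<lambda>k. 2 * (3/4::real) ^ k) \<longlonglongrightarrow> 0"
      by (rule tendsto_mult_right_zero, rule LIMSEQ_power_zero) simp
    have ev: "\<forall>\<^sub>F k in sequentially. norm (cs k) \<le> 2 * (3/4) ^ k"
      using inv by simp
    show ?thesis by (rule Lim_null_comparison[OF ev l0])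
  qed
  have l1: "(\<lambda>M. (\<Sum>m<M. Pm m) - (\<Sum>m<M. Qm m)) \<longlonglongrightarrow> suminf Pm - suminf Qm"
    by (intro tendsto_diff limP limQ)
  have l2: "(\<lambda>M. (\<Sum>m<M. Pm m) - (\<Sum>m<M. Qm m)) \<longlonglongrightarrow> h - g 0 - 0"
    unfolding tele by (intro tendsto_diff LIMSEQ_Suc[OF gl] tendsto_const cl)
  have "suminf Pm - suminf Qm = h - g 0" using LIMSEQ_unique[OF l1 l2] by simp
  then have "h = suminf Pm - suminf Qm + g 0" by (simp add: algebra_simps)
  then show "h \<in> V" using Vadd[OF Vdiff[OF SPV SQV] gV] by simp
qed

lemma V_closed: "closed V"
  unfolding closed_sequential_limits
proof (intro allI impI, elim conjE)
  fix v a assume vV: "\<forall>n. v n \<in> V" and lim: "v \<longlonglongrightarrow> a"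
  define re where "re z = (1/2::real) *\<^sub>R (z + st z)" for z
  define im where "im z = emb (- \<i> / 2) * (z - st z)" for z
  have reV: "re z \<in> V" if "z \<in> V" for z unfolding re_def using VscaleR Vadd Vst that by blast
  have imV: "im z \<in> V" if "z \<in> V" for z unfolding im_def using Vemb Vdiff Vst that by blast
  have sare: "sa (re z)" for z unfolding re_def self_adjoint_def by (simp add: st_scaleR st_add add.commute)
  have saim: "sa (im z)" for z
  proof -
    have "st (im z) = emb (\<i> / 2) * (st z - z)" unfolding im_def by (simp add: st_emb_mult st_diff)
    also have "\<dots> = emb (- \<i> / 2) * (z - st z)"
    proof -
      have "emb (- \<i> / 2) = - emb (\<i> / 2)" using emb_minus[of "\<i> / 2"] by simp
      then show ?thesis by (simp add: right_diff_distrib)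
    qed
    finally show ?thesis unfolding self_adjoint_def im_def .
  qed
  have limre: "(\<lambda>n. re (v n)) \<longlonglongrightarrow> re a" unfolding re_def
    by (intro tendsto_scaleR tendsto_const tendsto_add lim st_continuous)
  have limim: "(\<lambda>n. im (v n)) \<longlonglongrightarrow> im a" unfolding im_def
    by (intro tendsto_mult tendsto_const tendsto_diff lim st_continuous)
  have reaV: "re a \<in> V" by (rule sa_closure[OF sare _ sare limre]) (use vV reV in blast)
  have imaV: "im a \<in> V" by (rule sa_closure[OF saim _ saim limim]) (use vV imV in blast)
  have ii: "\<i> * (- \<i> / 2) = complex_of_real (1/2)" by (simp add: complex_eq_iff)
  have e2: "emb (1/2) * w = (1/2::real) *\<^sub>R w" for w using emb_real_mult[of "1/2" w] by simp
  have "emb \<i> * im a = (1/2::real) *\<^sub>R (a - st a)"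
    unfolding im_def by (simp add: mult.assoc[symmetric] emb_mult[symmetric] ii e2)
  moreover have "(1/2::real) *\<^sub>R (a + st a) + (1/2::real) *\<^sub>R (a - st a) = (1/2::real) *\<^sub>R a + (1/2::real) *\<^sub>R a"
    by (simp add: scaleR_add_right scaleR_diff_right)
  moreover have "(1/2::real) *\<^sub>R a + (1/2::real) *\<^sub>R a = a"
    using scaleR_left_distrib[of "1/2" "1/2" a] by simp
  ultimately have "a = re a + emb \<i> * im a" unfolding re_def by simp
  then show "a \<in> V" using Vadd[OF reaV Vemb[OF imaV, of \<i>]] by simp
qed

end

theorem lemma3p12:
  fixes sc :: "complex \<Rightarrow> 'a::{real_normed_algebra_1,banach} \<Rightarrow> 'a"
    and st :: "'a \<Rightarrow> 'a" and V :: "'a set"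
  assumes "cstar_algebra sc st"
    and "sigma_subspace sc st V"
    and "\<And>a. a \<in> V \<Longrightarrow> self_adjoint st a \<Longrightarrow> a * a \<in> V"
  shows "closed V"
proof -
  interpret cstar_V sc st V
    by (intro cstar_V.intro cstar.intro cstar_V_axioms.intro assms)
  show ?thesis by (rule V_closed)
qed

end
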